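(* Consider the asynchronous communication model described in the context, and suppose that $Q(y|\star)>0$ for all $y\in\mathcal Y$. Then no asynchronism exponent strictly greater than $$\max_{x\in\mathcal X}D\big(Q(\cdot|x)\,\|\,Q(\cdot|\star)\big)$$ is achievable (at any rate $R\ge 0$).
   Context: Model. A discrete memoryless channel has finite input alphabet $\mathcal X$, finite output alphabet $\mathcal Y$, transition probabilities $Q(y|x)$, and a distinguished "noise" input symbol $\star\in\mathcal X$. Standing assumptions: for every $y$ there is $x$ with $Q(y|x)>0$, and the synchronized capacity $C(Q)>0$. A code consists of $M\ge2$ equally likely messages, codewords $c^N(m)\in\mathcal X^N$, and a sequential decoder. The asynchronism level is an integer $A\ge1$: the start time $\nu$ is uniform on $\{1,\dots,A\}$, independent of the message. Given message $m$ and $\nu$, outputs $Y_1,Y_2,\dots$ are independent with $Y_i\sim Q(\cdot|\star)$ if $i\le\nu-1$ or $i\ge\nu+N$, and $Y_i\sim Q(\cdot|c_{i-\nu+1}(m))$ for $\nu\le i\le\nu+N-1$. The receiver knows $A$ and the code but not $\nu$. A decoder is $(\tau,\phi)$ with $\tau$ a stopping time w.r.t. $Y_1,Y_2,\dots$ and $\phi$ a function of $Y_1,\dots,Y_\tau$ returning a message. With $\mathbb P_{m,l},\mathbb E_{m,l}$ conditioning on message $m$ and $\nu=l$: $\mathbb P(\mathcal E)=\frac1{AM}\sum_{m,l}\mathbb P_{m,l}(\phi\neq m)$, $\mathbb E(\tau-\nu)^+=\frac1{AM}\sum_{m,l}\mathbb E_{m,l}(\tau-l)^+$, rate $R=\ln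 M/\mathbb E(\tau-\nu)^+$. An asynchronism exponent $\alpha$ is achievable at rate $R$ if for every $\varepsilon>0$ there is a code with (sufficiently large) blocklength $N$ operating at asynchronism level $A=e^{(\alpha-\varepsilon)N}$ with rate at least $R-\varepsilon$ and $\mathbb P(\mathcal E)\le\varepsilon$. $D$ is Kullback–Leibler divergence. *)

theory Defs
  imports "HOL-Probability.Probability"
begin

definition KL_div :: "'y::finite pmf \<Rightarrow> 'y pmf \<Rightarrow> real" where
  "KL_div P P' = (\<Sum>y\<in>UNIV. if pmf P y = 0 then 0 else pmf P y * ln (pmf P y / pmf P' y))"

definition mutual_info :: "'x::finite pmf \<Rightarrow> ('x \<Rightarrow> 'y::finite pmf) \<Rightarrow> real" where
  "mutual_info P Q = (\<Sum>x\<in>UNIV. pmf P x * KL_div (Q x) (bind_pmf P Q))"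

definition capacity :: "('x::finite \<Rightarrow> 'y::finite pmf) \<Rightarrow> real" where
  "capacity Q = (SUP P. mutual_info P Q)"

text \<open>Input to the channel at output index j+1 (i.e. Y_(j+1)), given start time l,
  blocklength N and codeword cw (positions 0..N-1).\<close>
definition chan_input :: "'x \<Rightarrow> nat \<Rightarrow> (nat \<Rightarrow> 'x) \<Rightarrow> nat \<Rightarrow> nat \<Rightarrow> 'x" where
  "chan_input star N cw l j = (if l \<le> j + 1 \<and> j + 1 < l + N then cw (j + 1 - l) else star)"

text \<open>Law of the output sequence (omega j = Y_(j+1)) given codeword cw and start time l.\<close>
definition out_measure ::
  "('x \<Rightarrow> 'y pmf) \<Rightarrow> 'x \<Rightarrow> nat \<Rightarrow> (nat \<Rightarrow> 'x) \<Rightarrow> nat \<Rightarrow> (nat \<Rightarrow> 'y) measure" where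
  "out_measure Q star N cw l = (\<Pi>\<^sub>M j\<in>UNIV. measure_pmf (Q (chan_input star N cw l j)))"

definition stop_time :: "('y list \<Rightarrow> bool) \<Rightarrow> (nat \<Rightarrow> 'y) \<Rightarrow> enat" where
  "stop_time stop \<omega> =
     (if \<exists>n. stop (map \<omega> [0..<n]) then enat (LEAST n. stop (map \<omega> [0..<n])) else \<infinity>)"

definition err_prob ::
  "('x \<Rightarrow> 'y pmf) \<Rightarrow> 'x \<Rightarrow> nat \<Rightarrow> (nat \<Rightarrow> nat \<Rightarrow> 'x) \<Rightarrow> ('y list \<Rightarrow> bool)
     \<Rightarrow> ('y list \<Rightarrow> nat) \<Rightarrow> nat \<Rightarrow> nat \<Rightarrow> real" where
  "err_prob Q star N c stop dec m l =
     measure (out_measure Q star N (c m) l)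
       {\<omega> \<in> space (out_measure Q star N (c m) l).
          stop_time stop \<omega> = \<infinity> \<or> dec (map \<omega> [0..<the_enat (stop_time stop \<omega>)]) \<noteq> m}"

definition delay ::
  "('x \<Rightarrow> 'y pmf) \<Rightarrow> 'x \<Rightarrow> nat \<Rightarrow> (nat \<Rightarrow> nat \<Rightarrow> 'x) \<Rightarrow> ('y list \<Rightarrow> bool)
     \<Rightarrow> nat \<Rightarrow> nat \<Rightarrow> ennreal" where
  "delay Q star N c stop m l =
     (\<integral>\<^sup>+ \<omega>. (case stop_time stop \<omega> of enat n \<Rightarrow> ennreal (real (n - l)) | \<infinity> \<Rightarrow> \<infinity>)
        \<partial>out_measure Q star N (c m) l)"

definition avg_err ::
  "('x \<Rightarrow> 'y pmf) \<Rightarrow> 'x \<Rightarrow> nat \<Rightarrow> nat \<Rightarrow> nat \<Rightarrow> (nat \<Rightarrow> nat \<Rightarrow> 'x) \<Rightarrow> ('y list \<Rightarrow> bool)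
     \<Rightarrow> ('y list \<Rightarrow> nat) \<Rightarrow> real" where
  "avg_err Q star A N M c stop dec =
     (\<Sum>m<M. \<Sum>l\<in>{1..A}. err_prob Q star N c stop dec m l) / (real A * real M)"

definition avg_delay ::
  "('x \<Rightarrow> 'y pmf) \<Rightarrow> 'x \<Rightarrow> nat \<Rightarrow> nat \<Rightarrow> nat \<Rightarrow> (nat \<Rightarrow> nat \<Rightarrow> 'x) \<Rightarrow> ('y list \<Rightarrow> bool)
     \<Rightarrow> ennreal" where
  "avg_delay Q star A N M c stop =
     ennreal (1 / (real A * real M)) * (\<Sum>m<M. \<Sum>l\<in>{1..A}. delay Q star N c stop m l)"

text \<open>Rate = ln M / avg_delay is
  at least R - eps iff (R - eps) * avg_delay <= ln M in ennreal (ln M / 0 read as +infinity,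
  ln M / infinity = 0).\<close>
definition achievable :: "('x \<Rightarrow> 'y pmf) \<Rightarrow> 'x \<Rightarrow> real \<Rightarrow> real \<Rightarrow> bool" where
  "achievable Q star \<alpha> R \<longleftrightarrow>
     (\<forall>\<epsilon>>0. \<forall>N0. \<exists>N\<ge>N0. \<exists>(M::nat) (c::nat \<Rightarrow> nat \<Rightarrow> 'x) stop (dec::'y list \<Rightarrow> nat).
        M \<ge> 2 \<and> (\<forall>ys. dec ys < M) \<and>
        (let A = nat \<lceil>exp ((\<alpha> - \<epsilon>) * real N)\<rceil> in
           ennreal (R - \<epsilon>) * avg_delay Q star A N M c stop \<le> ennreal (ln (real M)) \<and>
           avg_err Q star A N M c stop dec \<le> \<epsilon>))"

end

theory Submission
  imports Defs
begin



lemma prod_int_pmf: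
  fixes p :: "nat \<Rightarrow> 'y::finite pmf" and f :: "nat \<Rightarrow> 'y \<Rightarrow> real" and I :: "nat set"
  assumes I: "finite I"
  shows "(\<integral>\<omega>. (\<Prod>j\<in>I. f j (\<omega> j)) \<partial>(\<Pi>\<^sub>M j\<in>UNIV. measure_pmf (p j)))
        = (\<Prod>j\<in>I. \<integral>y. f j y \<partial>measure_pmf (p j))"
proof -
  interpret PP: product_prob_space "\<lambda>j. measure_pmf (p j)" UNIV
    by unfold_locales
  let ?h = "\<lambda>x. (\<Prod>j\<in>I. f j (x j))"
  have restr: "(\<lambda>x. restrict x I) \<in> measurable (\<Pi>\<^sub>M j\<in>UNIV. measure_pmf (p j)) (\<Pi>\<^sub>M j\<in>I. measure_pmf (p j))"
    by (rule measurable_restrict_subset) simp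
  have hm: "?h \<in> borel_measurable (\<Pi>\<^sub>M j\<in>I. measure_pmf (p j))"
    by (intro borel_measurable_prod measurable_compose[OF measurable_component_singleton]) auto
  have "(\<integral>\<omega>. (\<Prod>j\<in>I. f j (\<omega> j)) \<partial>(\<Pi>\<^sub>M j\<in>UNIV. measure_pmf (p j)))
      = (\<integral>\<omega>. ?h (restrict \<omega> I) \<partial>(\<Pi>\<^sub>M j\<in>UNIV. measure_pmf (p j)))"
    by (rule Bochner_Integration.integral_cong) auto
  also have "\<dots> = (\<integral>x. ?h x \<partial>distr (\<Pi>\<^sub>M j\<in>UNIV. measure_pmf (p j)) (\<Pi>\<^sub>M j\<in>I. measure_pmf (p j)) (\<lambda>x. restrict x I))"
    by (simp add: integral_distr[OF restr hm])
  also have "\<dots> = (\<integral>x. ?h x \<partial>(\<Pi>\<^sub>M j\<in>I. measure_pmf (p j)))"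
    using PP.distr_PiM_restrict_finite[OF I] by simp
  also have "\<dots> = (\<Prod>j\<in>I. \<integral>y. f j y \<partial>measure_pmf (p j))"
    by (rule PP.product_integral_prod[OF I]) (auto intro: integrable_measure_pmf_finite)
  finally show ?thesis .
qed

lemma prod_nn_int_pmf:
  fixes p :: "nat \<Rightarrow> 'y::finite pmf" and f :: "nat \<Rightarrow> 'y \<Rightarrow> ennreal" and I :: "nat set"
  assumes I: "finite I"
  shows "(\<integral>\<^sup>+\<omega>. (\<Prod>j\<in>I. f j (\<omega> j)) \<partial>(\<Pi>\<^sub>M j\<in>UNIV. measure_pmf (p j)))
        = (\<Prod>j\<in>I. \<integral>\<^sup>+y. f j y \<partial>measure_pmf (p j))"
proof -
  interpret PP: product_prob_space "\<lambda>j. measure_pmf (p j)" UNIV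
    by unfold_locales
  let ?h = "\<lambda>x. (\<Prod>j\<in>I. f j (x j))"
  have restr: "(\<lambda>x. restrict x I) \<in> measurable (\<Pi>\<^sub>M j\<in>UNIV. measure_pmf (p j)) (\<Pi>\<^sub>M j\<in>I. measure_pmf (p j))"
    by (rule measurable_restrict_subset) simp
  have hm: "?h \<in> borel_measurable (\<Pi>\<^sub>M j\<in>I. measure_pmf (p j))"
    by (intro borel_measurable_prod_ennreal measurable_compose[OF measurable_component_singleton]) auto
  have "(\<integral>\<^sup>+\<omega>. (\<Prod>j\<in>I. f j (\<omega> j)) \<partial>(\<Pi>\<^sub>M j\<in>UNIV. measure_pmf (p j)))
      = (\<integral>\<^sup>+\<omega>. ?h (restrict \<omega> I) \<partial>(\<Pi>\<^sub>M j\<in>UNIV. measure_pmf (p j)))"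
    by (rule nn_integral_cong) auto
  also have "\<dots> = (\<integral>\<^sup>+x. ?h x \<partial>distr (\<Pi>\<^sub>M j\<in>UNIV. measure_pmf (p j)) (\<Pi>\<^sub>M j\<in>I. measure_pmf (p j)) (\<lambda>x. restrict x I))"
    using hm by (simp add: nn_integral_distr[OF restr])
  also have "\<dots> = (\<integral>\<^sup>+x. ?h x \<partial>(\<Pi>\<^sub>M j\<in>I. measure_pmf (p j)))"
    using PP.distr_PiM_restrict_finite[OF I] by simp
  also have "\<dots> = (\<Prod>j\<in>I. \<integral>\<^sup>+y. f j y \<partial>measure_pmf (p j))"
    by (rule PP.product_nn_integral_prod[OF I]) auto
  finally show ?thesis .
qed

lemma nn_pmf_sum: "(\<integral>\<^sup>+y. f y \<partial>measure_pmf (p::'y::finite pmf)) = (\<Sum>y\<in>UNIV. ennreal (pmf p y) * f y)"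
  by (simp add: nn_integral_measure_pmf nn_integral_count_space_finite)

lemma int_pmf_sum: "(\<integral>y. f y \<partial>measure_pmf (p::'y::finite pmf)) = (\<Sum>y\<in>UNIV. pmf p y * f y)"
  by (subst integral_measure_pmf_real[of UNIV]) (auto simp: mult.commute)

definition rr :: "('x \<Rightarrow> 'y pmf) \<Rightarrow> 'x \<Rightarrow> 'x \<Rightarrow> 'y \<Rightarrow> real" where
  "rr Q star x y = pmf (Q x) y / pmf (Q star) y"

definition Lik :: "('x \<Rightarrow> 'y pmf) \<Rightarrow> 'x \<Rightarrow> nat \<Rightarrow> (nat \<Rightarrow> 'x) \<Rightarrow> (nat \<Rightarrow> 'y) \<Rightarrow> real" where
  "Lik Q star K x \<omega> = (\<Prod>j<K. rr Q star (x j) (\<omega> j))"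

definition muQ :: "('x \<Rightarrow> 'y pmf) \<Rightarrow> (nat \<Rightarrow> 'x) \<Rightarrow> (nat \<Rightarrow> 'y) measure" where
  "muQ Q x = (\<Pi>\<^sub>M j\<in>UNIV. measure_pmf (Q (x j)))"

lemma rr_nonneg: "0 \<le> rr Q star x y"
  by (simp add: rr_def)

lemma rr_star: "pmf (Q star) y > 0 \<Longrightarrow> rr Q star star y = 1"
  by (simp add: rr_def)

lemma Lik_nonneg: "0 \<le> Lik Q star K x \<omega>"
  by (simp add: Lik_def prod_nonneg rr_nonneg)

lemma space_muQ[simp]: "space (muQ Q x) = UNIV"
  by (simp add: muQ_def space_PiM)

lemma sets_muQ: "sets (muQ Q x) = sets (muQ Q x')"
  unfolding muQ_def by (rule sets_PiM_cong) auto

lemma prob_space_muQ: "prob_space (muQ Q x)"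
  unfolding muQ_def by (rule prob_space_PiM) (simp add: prob_space_measure_pmf)

lemma meas_prodfun[measurable]:
  fixes f :: "nat \<Rightarrow> 'y \<Rightarrow> real"
  shows "(\<lambda>\<omega>. \<Prod>j\<in>I. f j (\<omega> j)) \<in> borel_measurable (muQ Q x)"
  unfolding muQ_def
  by (intro borel_measurable_prod measurable_compose[OF measurable_component_singleton]) auto

lemma meas_Lik[measurable]: "(\<lambda>\<omega>. Lik Q star K x \<omega>) \<in> borel_measurable (muQ Q x')"
  unfolding Lik_def by (rule meas_prodfun)

lemma sum_pmf_rr:
  fixes Q :: "'x \<Rightarrow> 'y::finite pmf"
  assumes pos: "\<forall>y. pmf (Q star) y > 0"
  shows "ennreal (pmf (Q star) y) * ennreal (rr Q star x y) = ennreal (pmf (Q x) y)"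
  using pos[rule_format, of y] by (simp add: rr_def ennreal_mult'[symmetric] less_imp_le)

lemma density_muQ:
  fixes Q :: "'x \<Rightarrow> 'y::finite pmf"
  assumes pos: "\<forall>y. pmf (Q star) y > 0" and xK: "\<forall>j\<ge>K. x j = star"
  shows "muQ Q x = density (muQ Q (\<lambda>_. star)) (\<lambda>\<omega>. ennreal (Lik Q star K x \<omega>))"
proof (rule measure_eqI_PiM_infinite[where I=UNIV and M="\<lambda>j. measure_pmf (Q (x j))"])
  show "sets (muQ Q x) = sets (\<Pi>\<^sub>M j\<in>UNIV. measure_pmf (Q (x j)))" by (simp add: muQ_def)
  show "sets (density (muQ Q (\<lambda>_. star)) (\<lambda>\<omega>. ennreal (Lik Q star K x \<omega>))) = sets (\<Pi>\<^sub>M j\<in>UNIV. measure_pmf (Q (x j)))"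
    using sets_muQ[of Q "\<lambda>_. star" x] by (simp add: muQ_def)
  show "finite_measure (muQ Q x)"
    using prob_space_muQ[of Q x] unfolding prob_space_def by simp
next
  fix A J assume J: "finite J" "J \<subseteq> (UNIV::nat set)"
  let ?C = "prod_emb UNIV (\<lambda>j. measure_pmf (Q (x j))) J (Pi\<^sub>E J A)"
  have C: "?C = {\<omega>. \<forall>j\<in>J. \<omega> j \<in> A j}"
    by (auto simp: prod_emb_def space_PiM PiE_iff)
  have lhs: "emeasure (muQ Q x) ?C = (\<Prod>j\<in>J. emeasure (measure_pmf (Q (x j))) (A j))"
    unfolding muQ_def using J by (intro emeasure_PiM_emb) (auto simp: prob_space_measure_pmf)
  define F where "F j y = ennreal (rr Q star (x j) y) * (if j \<in> J then indicator (A j) y else 1)" for j y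
  have Cm: "?C \<in> sets (muQ Q (\<lambda>_. star))"
    using sets_muQ[of Q "\<lambda>_. star" x] J by (simp add: muQ_def sets_PiM_I)
  have "emeasure (density (muQ Q (\<lambda>_. star)) (\<lambda>\<omega>. ennreal (Lik Q star K x \<omega>))) ?C
      = (\<integral>\<^sup>+\<omega>. ennreal (Lik Q star K x \<omega>) * indicator ?C \<omega> \<partial>muQ Q (\<lambda>_. star))"
    using Cm by (subst emeasure_density) (auto simp: mult.commute)
  also have "\<dots> = (\<integral>\<^sup>+\<omega>. (\<Prod>j\<in>J \<union> {..<K}. F j (\<omega> j)) \<partial>muQ Q (\<lambda>_. star))"
  proof (rule nn_integral_cong)
    fix \<omega> :: "nat \<Rightarrow> 'y"
    have r1: "j \<notin> {..<K} \<Longrightarrow> rr Q star (x j) y = 1" for j y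
      using xK pos by (simp add: rr_star not_less)
    have "(\<Prod>j\<in>J \<union> {..<K}. F j (\<omega> j)) = (\<Prod>j\<in>J \<union> {..<K}. ennreal (rr Q star (x j) (\<omega> j))) *
            (\<Prod>j\<in>J \<union> {..<K}. (if j \<in> J then indicator (A j) (\<omega> j) else 1))"
      by (simp add: F_def prod.distrib)
    also have "(\<Prod>j\<in>J \<union> {..<K}. ennreal (rr Q star (x j) (\<omega> j))) = (\<Prod>j\<in>{..<K}. ennreal (rr Q star (x j) (\<omega> j)))"
      using J r1 by (intro prod.mono_neutral_right) auto
    also have "\<dots> = ennreal (Lik Q star K x \<omega>)"
      by (simp add: Lik_def prod_ennreal rr_nonneg)
    also have "(\<Prod>j\<in>J \<union> {..<K}. (if j \<in> J then indicator (A j) (\<omega> j) else 1)) = (\<Prod>j\<in>J. indicator (A j) (\<omega> j) :: ennreal)"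
      using J by (subst prod.mono_neutral_right[of "J \<union> {..<K}" J]) auto
    also have "\<dots> = indicator ?C \<omega>"
      unfolding C using J by (simp add: indicator_def prod_ennreal)
    finally show "ennreal (Lik Q star K x \<omega>) * indicator ?C \<omega> = (\<Prod>j\<in>J \<union> {..<K}. F j (\<omega> j))" by simp
  qed
  also have "\<dots> = (\<Prod>j\<in>J \<union> {..<K}. \<integral>\<^sup>+y. F j y \<partial>measure_pmf (Q star))"
    unfolding muQ_def using J by (intro prod_nn_int_pmf) auto
  also have "\<dots> = (\<Prod>j\<in>J \<union> {..<K}. (if j \<in> J then emeasure (measure_pmf (Q (x j))) (A j) else 1))"
  proof (rule prod.cong[OF refl])
    fix j
    have "(\<integral>\<^sup>+y. F j y \<partial>measure_pmf (Q star)) = (\<Sum>y\<in>UNIV. ennreal (pmf (Q (x j)) y) * (if j \<in> J then indicator (A j) y else 1))"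
      by (simp add: nn_pmf_sum F_def mult.assoc[symmetric] sum_pmf_rr[of Q star, OF pos])
    also have "\<dots> = (if j \<in> J then emeasure (measure_pmf (Q (x j))) (A j) else 1)"
    proof (cases "j \<in> J")
      case True
      have "(\<Sum>y\<in>UNIV. ennreal (pmf (Q (x j)) y) * indicator (A j) y) = (\<Sum>y\<in>A j. ennreal (pmf (Q (x j)) y))"
        by (simp add: sum.If_cases indicator_def Int_absorb1)
      also have "\<dots> = emeasure (measure_pmf (Q (x j))) (A j)"
        by (simp add: emeasure_measure_pmf_finite sum_ennreal)
      finally show ?thesis using True by simp
    next
      case False
      have "(\<Sum>y\<in>UNIV. ennreal (pmf (Q (x j)) y)) = emeasure (measure_pmf (Q (x j))) UNIV"
        by (simp add: emeasure_measure_pmf_finite sum_ennreal sum_pmf_eq_1)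
      then show ?thesis using False by (simp add: sum_pmf_eq_1)
    qed
    finally show "(\<integral>\<^sup>+y. F j y \<partial>measure_pmf (Q star)) = (if j \<in> J then emeasure (measure_pmf (Q (x j))) (A j) else 1)" .
  qed
  also have "\<dots> = (\<Prod>j\<in>J. emeasure (measure_pmf (Q (x j))) (A j))"
    using J by (subst prod.mono_neutral_right[of "J \<union> {..<K}" J]) auto
  finally show "emeasure (muQ Q x) ?C = emeasure (density (muQ Q (\<lambda>_. star)) (\<lambda>\<omega>. ennreal (Lik Q star K x \<omega>))) ?C"
    using lhs by simp
qed



lemma pointwise_key:
  fixes b x u \<eta> :: real
  assumes "b = 0 \<or> b = 1" "0 \<le> x" "0 \<le> u" "\<eta> > 0"
  shows "b * (x + u) \<le> (1 + \<eta>) * b + (x - 1)^2 / \<eta> + u"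
proof (cases "b = 0")
  case True then show ?thesis using assms by simp
next
  case False
  then have b: "b = 1" using assms by auto
  have "x \<le> 1 + \<eta> + (x - 1)^2 / \<eta>"
  proof (cases "x \<le> 1 + \<eta>")
    case True then show ?thesis using assms by (simp add: add_increasing2)
  next
    case False
    then have "\<eta> \<le> x - 1" by simp
    then have "(x - 1) * \<eta> \<le> (x - 1) * (x - 1)" using assms by (intro mult_left_mono) auto
    then have "x - 1 \<le> (x - 1)^2 / \<eta>" using assms by (simp add: field_simps power2_eq_square)
    then show ?thesis using assms by linarith
  qed
  then show ?thesis using b assms by simp
qed

lemma key_avg:
  fixes P :: "'a measure" and L :: "nat \<Rightarrow> 'a \<Rightarrow> real" and S :: "nat set"
  assumes P: "prob_space P" and S: "finite S" "S \<noteq> {}"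
    and meas: "\<And>l. l \<in> S \<Longrightarrow> L l \<in> borel_measurable P"
    and bnd: "\<And>l \<omega>. l \<in> S \<Longrightarrow> \<omega> \<in> space P \<Longrightarrow> 0 \<le> L l \<omega> \<and> L l \<omega> \<le> Bd"
    and mean: "\<And>l. l \<in> S \<Longrightarrow> (\<integral>\<omega>. L l \<omega> \<partial>P) = 1"
    and T: "0 \<le> T"
    and tail: "\<And>l. l \<in> S \<Longrightarrow> (\<integral>\<omega>. (if L l \<omega> > T then L l \<omega> else 0) \<partial>P) \<le> \<tau>"
    and sq: "(\<Sum>l\<in>S. \<Sum>l'\<in>S. \<integral>\<omega>. min (L l \<omega>) T * min (L l' \<omega>) T \<partial>P) \<le> (real (card S))^2 * (1 + V)"
    and E: "E \<in> sets P" and \<eta>: "\<eta> > 0"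
  shows "(\<Sum>l\<in>S. \<integral>\<omega>. indicator E \<omega> * L l \<omega> \<partial>P)
        \<le> real (card S) * ((1 + \<eta>) * measure P E + (V + 2 * \<tau>) / \<eta> + \<tau>)"
proof -
  interpret prob_space P by (rule P)
  define A where "A = real (card S)"
  have A: "A > 0" using S by (simp add: A_def card_gt_0_iff)
  define Lt where "Lt \<omega> = (\<Sum>l\<in>S. min (L l \<omega>) T) / A" for \<omega>
  define U where "U \<omega> = (\<Sum>l\<in>S. (if L l \<omega> > T then L l \<omega> else 0))" for \<omega>
  have Bd: "0 \<le> Bd"
  proof -
    obtain l where "l \<in> S" using S by auto
    moreover obtain \<omega> where "\<omega> \<in> space P" using not_empty by auto
    ultimately show ?thesis using bnd by force
  qed
  have int_b: "integrable P f" if "f \<in> borel_measurable P" "\<And>\<omega>. \<omega> \<in> space P \<Longrightarrow> \<bar>f \<omega>\<bar> \<le> C" for f :: "'a \<Rightarrow> real" and C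
    using that by (intro integrable_const_bound[where B=C]) auto
  have mL[measurable]: "L l \<in> borel_measurable P" if "l \<in> S" for l using meas that .
  have iL: "integrable P (L l)" if "l \<in> S" for l
    using that bnd Bd by (intro int_b[of _ Bd]) (auto simp: abs_le_iff)
  have imin: "integrable P (\<lambda>\<omega>. min (L l \<omega>) T)" if "l \<in> S" for l
    using that bnd T by (intro int_b[of _ T]) (auto simp: abs_le_iff)
  have iU1: "integrable P (\<lambda>\<omega>. if L l \<omega> > T then L l \<omega> else 0)" if "l \<in> S" for l
    using that bnd Bd by (intro int_b[of _ Bd]) (auto simp: abs_le_iff)
  have iEL: "integrable P (\<lambda>\<omega>. indicator E \<omega> * L l \<omega>)" if "l \<in> S" for l
    using that bnd E Bd by (intro int_b[of _ Bd]) (auto simp: abs_le_iff indicator_def)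
  have mLt[measurable]: "Lt \<in> borel_measurable P" unfolding Lt_def using meas by measurable
  have Lt_bnd: "0 \<le> Lt \<omega> \<and> Lt \<omega> \<le> T" if "\<omega> \<in> space P" for \<omega>
  proof -
    have "(\<Sum>l\<in>S. min (L l \<omega>) T) \<le> (\<Sum>l\<in>S. T)" by (intro sum_mono) auto
    moreover have "0 \<le> (\<Sum>l\<in>S. min (L l \<omega>) T)" using bnd that T by (intro sum_nonneg) auto
    ultimately show ?thesis using A by (simp add: Lt_def A_def field_simps)
  qed
  have iLt2: "integrable P (\<lambda>\<omega>. (Lt \<omega> - 1)^2 / \<eta>)"
  proof (rule int_b[of _ "(T + 1)^2 / \<eta>"])
    fix \<omega> assume "\<omega> \<in> space P"
    then have "\<bar>Lt \<omega> - 1\<bar> \<le> T + 1" using Lt_bnd[of \<omega>] T by (auto simp: abs_le_iff)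
    then have "(Lt \<omega> - 1)^2 \<le> (T + 1)^2"
      by (metis abs_ge_zero power2_abs power_mono)
    then show "\<bar>(Lt \<omega> - 1)^2 / \<eta>\<bar> \<le> (T + 1)^2 / \<eta>" using \<eta> by (simp add: divide_right_mono)
  qed measurable
  have mU[measurable]: "U \<in> borel_measurable P" unfolding U_def using meas by measurable
  have iU: "integrable P U" unfolding U_def using Bochner_Integration.integrable_sum[where I=S and M=P and f="\<lambda>l \<omega>. if T < L l \<omega> then L l \<omega> else 0"] iU1 by simp
  have iLt: "integrable P Lt" unfolding Lt_def by (intro integrable_divide Bochner_Integration.integrable_sum imin)
  have iE: "integrable P (indicator E :: 'a \<Rightarrow> real)" using E by (intro int_b[of _ 1]) (auto simp: indicator_def)
  have iESum: "integrable P (\<lambda>\<omega>. indicator E \<omega> * (\<Sum>l\<in>S. L l \<omega>))"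
    unfolding sum_distrib_left using Bochner_Integration.integrable_sum[where I=S and M=P and f="\<lambda>l \<omega>. indicator E \<omega> * L l \<omega>"] iEL by simp
  have pw: "indicator E \<omega> * (\<Sum>l\<in>S. L l \<omega>) \<le> A * ((1 + \<eta>) * indicator E \<omega> + (Lt \<omega> - 1)^2 / \<eta>) + U \<omega>"
    if \<omega>: "\<omega> \<in> space P" for \<omega>
  proof -
    have s1: "(\<Sum>l\<in>S. L l \<omega>) \<le> A * Lt \<omega> + U \<omega>"
    proof -
      have "(\<Sum>l\<in>S. L l \<omega>) \<le> (\<Sum>l\<in>S. min (L l \<omega>) T + (if L l \<omega> > T then L l \<omega> else 0))"
        using bnd \<omega> T by (intro sum_mono) auto
      also have "\<dots> = A * Lt \<omega> + U \<omega>" using A by (simp add: Lt_def U_def sum.distrib)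
      finally show ?thesis .
    qed
    have U0: "0 \<le> U \<omega>" unfolding U_def using bnd \<omega> by (intro sum_nonneg) auto
    have b: "indicator E \<omega> = (0::real) \<or> indicator E \<omega> = (1::real)" by (simp add: indicator_def)
    have key: "indicator E \<omega> * (Lt \<omega> + U \<omega> / A) \<le> (1 + \<eta>) * indicator E \<omega> + (Lt \<omega> - 1)^2 / \<eta> + U \<omega> / A"
      using pointwise_key[OF b _ _ \<eta>, of "Lt \<omega>" "U \<omega> / A"] Lt_bnd[OF \<omega>] U0 A by auto
    have "indicator E \<omega> * (\<Sum>l\<in>S. L l \<omega>) \<le> indicator E \<omega> * (A * Lt \<omega> + U \<omega>)"
      using s1 by (intro mult_left_mono) auto
    also have "\<dots> = A * (indicator E \<omega> * (Lt \<omega> + U \<omega> / A))" using A by (simp add: field_simps)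
    also have "\<dots> \<le> A * ((1 + \<eta>) * indicator E \<omega> + (Lt \<omega> - 1)^2 / \<eta> + U \<omega> / A)"
      using key A by (intro mult_left_mono) auto
    also have "\<dots> = A * ((1 + \<eta>) * indicator E \<omega> + (Lt \<omega> - 1)^2 / \<eta>) + U \<omega>"
      using A by (simp add: field_simps)
    finally show ?thesis .
  qed
  have "(\<Sum>l\<in>S. \<integral>\<omega>. indicator E \<omega> * L l \<omega> \<partial>P) = (\<integral>\<omega>. indicator E \<omega> * (\<Sum>l\<in>S. L l \<omega>) \<partial>P)"
    using iEL by (simp add: integral_sum[symmetric] sum_distrib_left)
  also have "\<dots> \<le> (\<integral>\<omega>. A * ((1 + \<eta>) * indicator E \<omega> + (Lt \<omega> - 1)^2 / \<eta>) + U \<omega> \<partial>P)"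
    using pw iESum iE iLt2 iU
    by (intro integral_mono) auto
  also have "\<dots> = A * ((1 + \<eta>) * measure P E + (\<integral>\<omega>. (Lt \<omega> - 1)^2 \<partial>P) / \<eta>) + (\<integral>\<omega>. U \<omega> \<partial>P)"
    using iE iLt2 iU E by (simp add: integral_add integral_mult_right_zero)
  finally have main: "(\<Sum>l\<in>S. \<integral>\<omega>. indicator E \<omega> * L l \<omega> \<partial>P)
      \<le> A * ((1 + \<eta>) * measure P E + (\<integral>\<omega>. (Lt \<omega> - 1)^2 \<partial>P) / \<eta>) + (\<integral>\<omega>. U \<omega> \<partial>P)" .
  have intU: "(\<integral>\<omega>. U \<omega> \<partial>P) \<le> A * \<tau>"
  proof -
    have "(\<integral>\<omega>. U \<omega> \<partial>P) = (\<Sum>l\<in>S. \<integral>\<omega>. (if L l \<omega> > T then L l \<omega> else 0) \<partial>P)"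
      unfolding U_def using iU1 Bochner_Integration.integral_sum[where I=S and M=P and f="\<lambda>l \<omega>. if T < L l \<omega> then L l \<omega> else 0"] by simp
    also have "\<dots> \<le> (\<Sum>l\<in>S. \<tau>)" using tail by (intro sum_mono) auto
    finally show ?thesis by (simp add: A_def)
  qed
  have imm: "integrable P (\<lambda>\<omega>. min (L l \<omega>) T * min (L l' \<omega>) T)" if "l \<in> S" "l' \<in> S" for l l'
  proof (rule int_b[of _ "T * T"])
    fix \<omega> assume \<omega>: "\<omega> \<in> space P"
    have "0 \<le> min (L l \<omega>) T" "0 \<le> min (L l' \<omega>) T" using bnd[OF that(1) \<omega>] bnd[OF that(2) \<omega>] T by auto
    then show "\<bar>min (L l \<omega>) T * min (L l' \<omega>) T\<bar> \<le> T * T"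
      by (simp add: abs_mult mult_mono')
  qed (use that meas in measurable)
  have Lt2: "Lt \<omega> ^ 2 = (\<Sum>l\<in>S. \<Sum>l'\<in>S. min (L l \<omega>) T * min (L l' \<omega>) T) / A^2" for \<omega>
    by (simp add: Lt_def power2_eq_square sum_product power_divide)
  have iLtsq: "integrable P (\<lambda>\<omega>. Lt \<omega> ^ 2)"
    unfolding Lt2 using imm by (intro integrable_divide Bochner_Integration.integrable_sum) blast
  have intLt2: "(\<integral>\<omega>. Lt \<omega> ^ 2 \<partial>P) \<le> 1 + V"
  proof -
    have "(\<integral>\<omega>. Lt \<omega> ^ 2 \<partial>P) = (\<Sum>l\<in>S. \<Sum>l'\<in>S. \<integral>\<omega>. min (L l \<omega>) T * min (L l' \<omega>) T \<partial>P) / A^2"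
      unfolding Lt2 using imm by (simp add: Bochner_Integration.integral_sum Bochner_Integration.integrable_sum)
    also have "\<dots> \<le> A^2 * (1 + V) / A^2" using sq A by (intro divide_right_mono) (auto simp: A_def)
    finally show ?thesis using A by simp
  qed
  have intLt: "(\<integral>\<omega>. Lt \<omega> \<partial>P) \<ge> 1 - \<tau>"
  proof -
    have each: "(\<integral>\<omega>. min (L l \<omega>) T \<partial>P) \<ge> 1 - \<tau>" if l: "l \<in> S" for l
    proof -
      have "(\<integral>\<omega>. L l \<omega> - (if L l \<omega> > T then L l \<omega> else 0) \<partial>P) \<le> (\<integral>\<omega>. min (L l \<omega>) T \<partial>P)"
        using l iL iU1 imin bnd T by (intro integral_mono) auto
      moreover have "(\<integral>\<omega>. L l \<omega> - (if L l \<omega> > T then L l \<omega> else 0) \<partial>P) = 1 - (\<integral>\<omega>. (if L l \<omega> > T then L l \<omega> else 0) \<partial>P)"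
        using l iL iU1 mean by (subst Bochner_Integration.integral_diff) auto
      ultimately show ?thesis using tail[OF l] by linarith
    qed
    have "(\<integral>\<omega>. Lt \<omega> \<partial>P) = (\<Sum>l\<in>S. \<integral>\<omega>. min (L l \<omega>) T \<partial>P) / A"
      unfolding Lt_def using imin Bochner_Integration.integral_sum[where I=S and M=P and f="\<lambda>l \<omega>. min (L l \<omega>) T"] by simp
    also have "\<dots> \<ge> (\<Sum>l\<in>S. 1 - \<tau>) / A" using each A by (intro divide_right_mono sum_mono) auto
    finally show ?thesis using A by (simp add: A_def)
  qed
  have intsq: "(\<integral>\<omega>. (Lt \<omega> - 1)^2 \<partial>P) \<le> V + 2 * \<tau>"
  proof -
    have "(\<integral>\<omega>. (Lt \<omega> - 1)^2 \<partial>P) = (\<integral>\<omega>. Lt \<omega> ^ 2 - 2 * Lt \<omega> + 1 \<partial>P)"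
      by (rule Bochner_Integration.integral_cong) (auto simp: power2_diff)
    also have "\<dots> = (\<integral>\<omega>. Lt \<omega> ^ 2 \<partial>P) - 2 * (\<integral>\<omega>. Lt \<omega> \<partial>P) + 1"
      using iLtsq iLt by (simp add: Bochner_Integration.integral_diff Bochner_Integration.integral_add prob_space)
    finally show ?thesis using intLt2 intLt by linarith
  qed
  have "(\<integral>\<omega>. (Lt \<omega> - 1)^2 \<partial>P) / \<eta> \<le> (V + 2 * \<tau>) / \<eta>"
    using intsq \<eta> by (intro divide_right_mono) auto
  then have "A * ((1 + \<eta>) * measure P E + (\<integral>\<omega>. (Lt \<omega> - 1)^2 \<partial>P) / \<eta>) + (\<integral>\<omega>. U \<omega> \<partial>P)
      \<le> A * ((1 + \<eta>) * measure P E + (V + 2 * \<tau>) / \<eta>) + A * \<tau>"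
    using intU A \<eta> by (intro add_mono mult_left_mono) auto
  with main show ?thesis by (simp add: A_def algebra_simps)
qed


lemma deriv_h:
  fixes Q :: "'x \<Rightarrow> 'y::finite pmf"
  assumes pos: "\<forall>y. pmf (Q star) y > 0"
  shows "((\<lambda>s. \<Sum>y\<in>UNIV. pmf (Q star) y * rr Q star x y powr (1 + s)) has_real_derivative KL_div (Q x) (Q star)) (at 0)"
proof -
  have d: "((\<lambda>s. pmf (Q star) y * rr Q star x y powr (1 + s)) has_real_derivative
        (if pmf (Q x) y = 0 then 0 else pmf (Q x) y * ln (pmf (Q x) y / pmf (Q star) y))) (at 0)" for y
  proof (cases "pmf (Q x) y = 0")
    case True
    then show ?thesis by (simp add: rr_def)
  next
    case False
    have p: "pmf (Q star) y > 0" using pos by simp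
    have r: "rr Q star x y > 0" using False p by (simp add: rr_def pmf_nonneg order.not_eq_order_implies_strict)
    have e: "(\<lambda>s. pmf (Q star) y * rr Q star x y powr (1 + s)) = (\<lambda>s. pmf (Q star) y * exp ((1 + s) * ln (rr Q star x y)))"
      using r by (simp add: powr_def)
    have "((\<lambda>s. pmf (Q star) y * exp ((1 + s) * ln (rr Q star x y))) has_real_derivative
          pmf (Q star) y * (exp ((1 + 0) * ln (rr Q star x y)) * (1 * ln (rr Q star x y)))) (at 0)"
      by (auto intro!: derivative_eq_intros)
    moreover have "pmf (Q star) y * (exp ((1 + 0) * ln (rr Q star x y)) * (1 * ln (rr Q star x y)))
        = pmf (Q x) y * ln (pmf (Q x) y / pmf (Q star) y)"
      using r p by (simp add: rr_def)
    ultimately show ?thesis using e False by simp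
  qed
  have "((\<lambda>s. \<Sum>y\<in>UNIV. pmf (Q star) y * rr Q star x y powr (1 + s)) has_real_derivative
        (\<Sum>y\<in>UNIV. (if pmf (Q x) y = 0 then 0 else pmf (Q x) y * ln (pmf (Q x) y / pmf (Q star) y)))) (at 0)"
    by (rule DERIV_sum) (rule d)
  then show ?thesis by (simp add: KL_div_def)
qed

lemma h0:
  fixes Q :: "'x \<Rightarrow> 'y::finite pmf"
  assumes pos: "\<forall>y. pmf (Q star) y > 0"
  shows "(\<Sum>y\<in>UNIV. pmf (Q star) y * rr Q star x y powr (1 + 0)) = 1"
proof -
  have "(\<Sum>y\<in>UNIV. pmf (Q star) y * rr Q star x y powr (1 + 0)) = (\<Sum>y\<in>UNIV. pmf (Q x) y)"
  proof (intro sum.cong refl)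
    fix y :: 'y
    have "pmf (Q star) y > 0" using pos by blast
    then show "pmf (Q star) y * rr Q star x y powr (1 + 0) = pmf (Q x) y" by (simp add: rr_def)
  qed
  also have "\<dots> = 1" by (simp add: sum_pmf_eq_1)
  finally show ?thesis .
qed

lemma renyi:
  fixes Q :: "'x::finite \<Rightarrow> 'y::finite pmf"
  assumes pos: "\<forall>y. pmf (Q star) y > 0" and B: "\<forall>x. KL_div (Q x) (Q star) < B"
  shows "\<exists>s>0. \<forall>x. (\<Sum>y\<in>UNIV. pmf (Q star) y * rr Q star x y powr (1 + s)) \<le> exp (s * B)"
proof -
  define h where "h x s = (\<Sum>y\<in>UNIV. pmf (Q star) y * rr Q star x y powr (1 + s))" for x s
  have ev: "\<forall>\<^sub>F s in at_right 0. (h x s - h x 0) / (s - 0) < B" for x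
  proof -
    have "((\<lambda>s. (h x s - h x 0) / (s - 0)) \<longlongrightarrow> KL_div (Q x) (Q star)) (at 0)"
      using deriv_h[of Q star x, OF pos] unfolding h_def has_field_derivative_iff by simp
    then have "\<forall>\<^sub>F s in at 0. (h x s - h x 0) / (s - 0) < B"
      using B by (intro order_tendstoD) auto
    then show ?thesis by (rule filter_leD[OF at_le, rotated]) simp
  qed
  have "\<forall>\<^sub>F s in at_right 0. \<forall>x. (h x s - h x 0) / (s - 0) < B"
    using ev by (simp add: eventually_all_finite)
  then obtain b where b: "b > 0" and hb: "\<And>s. 0 < s \<Longrightarrow> s < b \<Longrightarrow> \<forall>x. (h x s - h x 0) / (s - 0) < B"
    by (auto simp: eventually_at_right_field)
  define s where "s = b / 2"
  have s: "0 < s" "s < b" using b by (auto simp: s_def)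
  have "h x s \<le> exp (s * B)" for x
  proof -
    have h0': "h x 0 = 1" unfolding h_def by (rule h0[of Q star x, OF pos])
    have "(h x s - 1) / s < B" using hb[OF s, rule_format, of x] unfolding h0' by simp
    then have "h x s - 1 < s * B" using s by (simp add: field_simps)
    then have "h x s \<le> 1 + s * B" by simp
    also have "\<dots> \<le> exp (s * B)" by (rule exp_ge_add_one_self)
    finally show ?thesis .
  qed
  then show ?thesis using s by (auto simp: h_def)
qed

lemma meas_prefix:
  fixes Q :: "'x \<Rightarrow> 'y::finite pmf"
  shows "{\<omega>. \<Phi> (map \<omega> [0..<n])} \<in> sets (muQ Q x)"
proof -
  define Vs where "Vs = {v :: 'y list. set v \<subseteq> UNIV \<and> length v = n \<and> \<Phi> v}"
  have fin: "finite Vs" unfolding Vs_def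
    by (rule finite_subset[OF _ finite_lists_length_eq[of UNIV n]]) auto
  have eq: "{\<omega>. \<Phi> (map \<omega> [0..<n])} = {\<omega>\<in>space (muQ Q x). \<exists>v\<in>Vs. \<forall>j\<in>{..<n}. \<omega> j = v ! j}"
  proof (intro set_eqI iffI)
    fix \<omega> assume "\<omega> \<in> {\<omega>. \<Phi> (map \<omega> [0..<n])}"
    then show "\<omega> \<in> {\<omega>\<in>space (muQ Q x). \<exists>v\<in>Vs. \<forall>j\<in>{..<n}. \<omega> j = v ! j}"
    proof -
      assume a: "\<omega> \<in> {\<omega>. \<Phi> (map \<omega> [0..<n])}"
      have "map \<omega> [0..<n] \<in> Vs" using a by (simp add: Vs_def)
      moreover have "\<forall>j\<in>{..<n}. \<omega> j = map \<omega> [0..<n] ! j" by simp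
      ultimately have "\<exists>v\<in>Vs. \<forall>j\<in>{..<n}. \<omega> j = v ! j" by blast
      then show ?thesis by simp
    qed
  next
    fix \<omega> assume "\<omega> \<in> {\<omega>\<in>space (muQ Q x). \<exists>v\<in>Vs. \<forall>j\<in>{..<n}. \<omega> j = v ! j}"
    then obtain v where v: "v \<in> Vs" "\<forall>j\<in>{..<n}. \<omega> j = v ! j" by auto
    then have "map \<omega> [0..<n] = v" by (auto simp: Vs_def intro!: nth_equalityI)
    then show "\<omega> \<in> {\<omega>. \<Phi> (map \<omega> [0..<n])}" using v by (auto simp: Vs_def)
  qed
  have "Measurable.pred (muQ Q x) (\<lambda>\<omega>. \<exists>v\<in>Vs. \<forall>j\<in>{..<n}. \<omega> j = v ! j)"
    unfolding muQ_def using fin by measurable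
  then show ?thesis unfolding eq by (simp add: pred_def)
qed

lemma stop_time_eq:
  "stop_time stop \<omega> = enat n \<longleftrightarrow> stop (map \<omega> [0..<n]) \<and> (\<forall>k<n. \<not> stop (map \<omega> [0..<k]))"
proof
  assume h: "stop_time stop \<omega> = enat n"
  then have ex: "\<exists>n. stop (map \<omega> [0..<n])" by (auto simp: stop_time_def split: if_splits)
  then have n: "n = (LEAST n. stop (map \<omega> [0..<n]))" using h by (simp add: stop_time_def)
  show "stop (map \<omega> [0..<n]) \<and> (\<forall>k<n. \<not> stop (map \<omega> [0..<k]))"
    using ex unfolding n by (auto intro: LeastI_ex dest: not_less_Least)
next
  assume h: "stop (map \<omega> [0..<n]) \<and> (\<forall>k<n. \<not> stop (map \<omega> [0..<k]))"
  then have "(LEAST n. stop (map \<omega> [0..<n])) = n"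
    by (intro Least_equality) (auto simp: not_less[symmetric])
  then show "stop_time stop \<omega> = enat n" using h by (auto simp: stop_time_def)
qed

definition Ev :: "('y list \<Rightarrow> bool) \<Rightarrow> ('y list \<Rightarrow> nat) \<Rightarrow> nat \<Rightarrow> (nat \<Rightarrow> 'y) set" where
  "Ev stop dec m = {\<omega>. stop_time stop \<omega> \<noteq> \<infinity> \<and> dec (map \<omega> [0..<the_enat (stop_time stop \<omega>)]) = m}"

lemma meas_Ev:
  fixes Q :: "'x \<Rightarrow> 'y::finite pmf"
  shows "Ev stop dec m \<in> sets (muQ Q x)"
proof -
  have "Ev stop dec m = (\<Union>n. {\<omega>. (\<lambda>v. stop v \<and> (\<forall>k<n. \<not> stop (take k v)) \<and> dec v = m) (map \<omega> [0..<n])})"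
  proof (intro set_eqI iffI)
    fix \<omega> assume "\<omega> \<in> Ev stop dec m"
    then obtain n where n: "stop_time stop \<omega> = enat n" "dec (map \<omega> [0..<n]) = m"
      by (auto simp: Ev_def)
    then show "\<omega> \<in> (\<Union>n. {\<omega>. (\<lambda>v. stop v \<and> (\<forall>k<n. \<not> stop (take k v)) \<and> dec v = m) (map \<omega> [0..<n])})"
      by (auto simp: stop_time_eq take_map)
  next
    fix \<omega> assume "\<omega> \<in> (\<Union>n. {\<omega>. (\<lambda>v. stop v \<and> (\<forall>k<n. \<not> stop (take k v)) \<and> dec v = m) (map \<omega> [0..<n])})"
    then obtain n where n: "stop (map \<omega> [0..<n])" "\<forall>k<n. \<not> stop (map \<omega> [0..<k])" "dec (map \<omega> [0..<n]) = m"
      by (auto simp: take_map)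
    then have "stop_time stop \<omega> = enat n" by (simp add: stop_time_eq)
    then show "\<omega> \<in> Ev stop dec m" using n by (simp add: Ev_def)
  qed
  also have "\<dots> \<in> sets (muQ Q x)"
  proof (intro sets.countable_UN subsetI)
    fix A assume "A \<in> range (\<lambda>n. {\<omega>. (\<lambda>v. stop v \<and> (\<forall>k<n. \<not> stop (take k v)) \<and> dec v = m) (map \<omega> [0..<n])})"
    then obtain n where "A = {\<omega>. (\<lambda>v. stop v \<and> (\<forall>k<n. \<not> stop (take k v)) \<and> dec v = m) (map \<omega> [0..<n])}" by auto
    then show "A \<in> sets (muQ Q x)"
      using meas_prefix[of "\<lambda>v. stop v \<and> (\<forall>k<n. \<not> stop (take k v)) \<and> dec v = m" n Q x] by simp
  qed
  finally show ?thesis .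
qed



lemma int_bounded_muQ:
  fixes f :: "_ \<Rightarrow> real"
  assumes "f \<in> borel_measurable (muQ Q x)" "\<And>\<omega>. \<bar>f \<omega>\<bar> \<le> C"
  shows "integrable (muQ Q x) f"
proof -
  interpret prob_space "muQ Q x" by (rule prob_space_muQ)
  show ?thesis using assms by (intro integrable_const_bound[where B=C]) auto
qed

definition cQ :: "('x::finite \<Rightarrow> 'y::finite pmf) \<Rightarrow> 'x \<Rightarrow> real" where
  "cQ Q star = (\<Sum>x'\<in>UNIV. \<Sum>y\<in>UNIV. rr Q star x' y)"

lemma rr_le_cQ: "rr Q star x y \<le> cQ Q star"
proof -
  have "rr Q star x y \<le> (\<Sum>y\<in>UNIV. rr Q star x y)" by (rule member_le_sum) (auto simp: rr_nonneg)
  also have "\<dots> \<le> cQ Q star" unfolding cQ_def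
    by (rule member_le_sum[where f="\<lambda>x'. \<Sum>y\<in>UNIV. rr Q star x' y"]) (auto intro: sum_nonneg simp: rr_nonneg)
  finally show ?thesis .
qed

lemma cQ_nonneg[simp]: "0 \<le> cQ Q star"
  unfolding cQ_def by (intro sum_nonneg) (auto simp: rr_nonneg)

lemma cQ_pow_nonneg[simp]: "0 \<le> cQ Q star ^ K"
  by simp

lemma Lik_le: "Lik Q star K x \<omega> \<le> cQ Q star ^ K"
  unfolding Lik_def using prod_mono[of "{..<K}" "\<lambda>j. rr Q star (x j) (\<omega> j)" "\<lambda>_. cQ Q star"]
  by (simp add: rr_nonneg rr_le_cQ)

lemma int_rr:
  fixes Q :: "'x::finite \<Rightarrow> 'y::finite pmf"
  assumes pos: "\<forall>y. pmf (Q star) y > 0"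
  shows "(\<integral>y. rr Q star x y \<partial>measure_pmf (Q star)) = 1"
proof -
  have "(\<integral>y. rr Q star x y \<partial>measure_pmf (Q star)) = (\<Sum>y\<in>UNIV. pmf (Q x) y)"
    unfolding int_pmf_sum
  proof (intro sum.cong refl)
    fix y :: 'y
    have "pmf (Q star) y > 0" using pos by blast
    then show "pmf (Q star) y * rr Q star x y = pmf (Q x) y" by (simp add: rr_def)
  qed
  also have "\<dots> = 1" by (simp add: sum_pmf_eq_1)
  finally show ?thesis .
qed

lemma mean_Lik:
  fixes Q :: "'x::finite \<Rightarrow> 'y::finite pmf"
  assumes pos: "\<forall>y. pmf (Q star) y > 0"
  shows "(\<integral>\<omega>. Lik Q star K x \<omega> \<partial>muQ Q (\<lambda>_. star)) = 1"
  unfolding Lik_def muQ_def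
  using prod_int_pmf[where p="\<lambda>_. Q star" and I="{..<K}" and f="\<lambda>j. rr Q star (x j)"]
  by (simp add: int_rr[of Q star, OF pos])

lemma meas_eq_int:
  fixes Q :: "'x::finite \<Rightarrow> 'y::finite pmf"
  assumes pos: "\<forall>y. pmf (Q star) y > 0" and xK: "\<forall>j\<ge>K. x j = star"
    and E: "E \<in> sets (muQ Q (\<lambda>_. star))"
  shows "measure (muQ Q x) E = (\<integral>\<omega>. indicator E \<omega> * Lik Q star K x \<omega> \<partial>muQ Q (\<lambda>_. star))"
proof -
  have int: "integrable (muQ Q (\<lambda>_. star)) (\<lambda>\<omega>. indicator E \<omega> * Lik Q star K x \<omega>)"
    using E Lik_le[of Q star K x] Lik_nonneg[of Q star K x]
    by (intro int_bounded_muQ[where C="cQ Q star ^ K"]) (auto simp: indicator_def)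
  have "emeasure (muQ Q x) E = (\<integral>\<^sup>+\<omega>. ennreal (Lik Q star K x \<omega>) * indicator E \<omega> \<partial>muQ Q (\<lambda>_. star))"
    using E by (subst density_muQ[where Q=Q and star=star and K=K and x=x, OF pos xK]) (simp add: emeasure_density)
  also have "\<dots> = (\<integral>\<^sup>+\<omega>. ennreal (indicator E \<omega> * Lik Q star K x \<omega>) \<partial>muQ Q (\<lambda>_. star))"
    by (intro nn_integral_cong) (auto simp: indicator_def)
  also have "\<dots> = ennreal (\<integral>\<omega>. indicator E \<omega> * Lik Q star K x \<omega> \<partial>muQ Q (\<lambda>_. star))"
    using int by (intro nn_integral_eq_integral) (auto simp: Lik_nonneg)
  finally show ?thesis
    by (simp add: measure_def integral_nonneg_AE Lik_nonneg)
qed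

lemma pair_Lik:
  fixes Q :: "'x::finite \<Rightarrow> 'y::finite pmf"
  assumes pos: "\<forall>y. pmf (Q star) y > 0" and dis: "\<forall>j. x j = star \<or> x' j = star"
  shows "(\<integral>\<omega>. Lik Q star K x \<omega> * Lik Q star K x' \<omega> \<partial>muQ Q (\<lambda>_. star)) = 1"
proof -
  have "(\<integral>\<omega>. Lik Q star K x \<omega> * Lik Q star K x' \<omega> \<partial>muQ Q (\<lambda>_. star))
      = (\<integral>\<omega>. (\<Prod>j\<in>{..<K}. rr Q star (x j) (\<omega> j) * rr Q star (x' j) (\<omega> j)) \<partial>muQ Q (\<lambda>_. star))"
    by (simp add: Lik_def prod.distrib)
  also have "\<dots> = (\<Prod>j\<in>{..<K}. \<integral>y. rr Q star (x j) y * rr Q star (x' j) y \<partial>measure_pmf (Q star))"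
    unfolding muQ_def
    using prod_int_pmf[where p="\<lambda>_. Q star" and I="{..<K}" and f="\<lambda>j y. rr Q star (x j) y * rr Q star (x' j) y"]
    by simp
  also have "\<dots> = 1"
  proof (intro prod.neutral ballI)
    fix j
    have p: "\<And>y. pmf (Q star) y > 0" using pos by blast
    show "(\<integral>y. rr Q star (x j) y * rr Q star (x' j) y \<partial>measure_pmf (Q star)) = 1"
    proof (cases "x j = star")
      case True
      then have "(\<lambda>y. rr Q star (x j) y * rr Q star (x' j) y) = rr Q star (x' j)"
        using p by (simp add: rr_star fun_eq_iff)
      then show ?thesis using int_rr[of Q star, OF pos] by simp
    next
      case False
      then have "x' j = star" using dis by blast
      then have "(\<lambda>y. rr Q star (x j) y * rr Q star (x' j) y) = rr Q star (x j)"
        using p by (simp add: rr_star fun_eq_iff)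
      then show ?thesis using int_rr[of Q star, OF pos] by simp
    qed
  qed
  finally show ?thesis .
qed

lemma tail_Lik:
  fixes Q :: "'x::finite \<Rightarrow> 'y::finite pmf"
  assumes pos: "\<forall>y. pmf (Q star) y > 0" and s: "s > 0" and T: "T > 0"
  shows "(\<integral>\<omega>. (if Lik Q star K x \<omega> > T then Lik Q star K x \<omega> else 0) \<partial>muQ Q (\<lambda>_. star))
      \<le> T powr (-s) * (\<Prod>j<K. \<Sum>y\<in>UNIV. pmf (Q star) y * rr Q star (x j) y powr (1 + s))"
proof -
  let ?L = "Lik Q star K x"
  have pw: "(if ?L \<omega> > T then ?L \<omega> else 0) \<le> T powr (-s) * (\<Prod>j<K. rr Q star (x j) (\<omega> j) powr (1 + s))" for \<omega>
  proof -
    have eq: "(\<Prod>j<K. rr Q star (x j) (\<omega> j) powr (1 + s)) = ?L \<omega> powr (1 + s)"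
      by (simp add: Lik_def prod_powr_distrib rr_nonneg)
    show ?thesis
    proof (cases "?L \<omega> > T")
      case True
      then have Lp: "?L \<omega> > 0" using T by simp
      have "T powr s \<le> ?L \<omega> powr s" using True T s by (intro powr_mono2) auto
      then have "?L \<omega> * T powr s \<le> ?L \<omega> * ?L \<omega> powr s" using Lp by (intro mult_left_mono) auto
      also have "\<dots> = ?L \<omega> powr (1 + s)" using Lp by (simp add: powr_add)
      finally have "?L \<omega> \<le> ?L \<omega> powr (1 + s) / T powr s" using T by (simp add: field_simps)
      then show ?thesis using True T by (simp add: eq powr_minus divide_inverse mult.commute)
    next
      case False
      then show ?thesis by (simp add: prod_nonneg)
    qed
  qed
  have eqL: "(\<Prod>j<K. rr Q star (x j) (\<omega> j) powr (1 + s)) = ?L \<omega> powr (1 + s)" for \<omega>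
    by (simp add: Lik_def prod_powr_distrib rr_nonneg)
  have i1: "integrable (muQ Q (\<lambda>_. star)) (\<lambda>\<omega>. if ?L \<omega> > T then ?L \<omega> else 0)"
    using Lik_le[of Q star K x] Lik_nonneg[of Q star K x]
    by (intro int_bounded_muQ[where C="cQ Q star ^ K"]) auto
  have i2: "integrable (muQ Q (\<lambda>_. star)) (\<lambda>\<omega>. (\<Prod>j<K. rr Q star (x j) (\<omega> j) powr (1 + s)))"
  proof (rule int_bounded_muQ[where C="(cQ Q star ^ K) powr (1 + s)"])
    show "(\<lambda>\<omega>. \<Prod>j<K. rr Q star (x j) (\<omega> j) powr (1 + s)) \<in> borel_measurable (muQ Q (\<lambda>_. star))"
      by (rule meas_prodfun)
    fix \<omega>
    have "?L \<omega> powr (1 + s) \<le> (cQ Q star ^ K) powr (1 + s)"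
      using Lik_le[of Q star K x \<omega>] Lik_nonneg[of Q star K x \<omega>] s by (intro powr_mono2) auto
    then show "\<bar>\<Prod>j<K. rr Q star (x j) (\<omega> j) powr (1 + s)\<bar> \<le> (cQ Q star ^ K) powr (1 + s)"
      by (simp add: eqL)
  qed
  have "(\<integral>\<omega>. (if ?L \<omega> > T then ?L \<omega> else 0) \<partial>muQ Q (\<lambda>_. star))
      \<le> (\<integral>\<omega>. T powr (-s) * (\<Prod>j<K. rr Q star (x j) (\<omega> j) powr (1 + s)) \<partial>muQ Q (\<lambda>_. star))"
    using i1 i2 pw by (intro integral_mono) auto
  also have "\<dots> = T powr (-s) * (\<integral>\<omega>. (\<Prod>j<K. rr Q star (x j) (\<omega> j) powr (1 + s)) \<partial>muQ Q (\<lambda>_. star))"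
    by simp
  also have "(\<integral>\<omega>. (\<Prod>j<K. rr Q star (x j) (\<omega> j) powr (1 + s)) \<partial>muQ Q (\<lambda>_. star))
      = (\<Prod>j<K. \<Sum>y\<in>UNIV. pmf (Q star) y * rr Q star (x j) y powr (1 + s))"
    unfolding muQ_def
    using prod_int_pmf[where p="\<lambda>_. Q star" and I="{..<K}" and f="\<lambda>j y. rr Q star (x j) y powr (1 + s)"]
    by (simp add: int_pmf_sum)
  finally show ?thesis .
qed


lemma int_mm:
  fixes Q :: "'x::finite \<Rightarrow> 'y::finite pmf"
  assumes T: "0 \<le> T"
  shows "integrable (muQ Q (\<lambda>_. star)) (\<lambda>\<omega>. min (Lik Q star K x \<omega>) T * min (Lik Q star K x' \<omega>) T)"
proof (rule int_bounded_muQ[where C="T * T"])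
  show "(\<lambda>\<omega>. min (Lik Q star K x \<omega>) T * min (Lik Q star K x' \<omega>) T) \<in> borel_measurable (muQ Q (\<lambda>_. star))"
    by measurable
  fix \<omega>
  have "0 \<le> min (Lik Q star K x \<omega>) T" "0 \<le> min (Lik Q star K x' \<omega>) T" using T by (auto simp: Lik_nonneg)
  then show "\<bar>min (Lik Q star K x \<omega>) T * min (Lik Q star K x' \<omega>) T\<bar> \<le> T * T"
    by (simp add: abs_mult mult_mono')
qed

lemma int_LL:
  fixes Q :: "'x::finite \<Rightarrow> 'y::finite pmf"
  shows "integrable (muQ Q (\<lambda>_. star)) (\<lambda>\<omega>. Lik Q star K x \<omega> * Lik Q star K x' \<omega>)"
proof (rule int_bounded_muQ[where C="cQ Q star ^ K * cQ Q star ^ K"])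
  show "(\<lambda>\<omega>. Lik Q star K x \<omega> * Lik Q star K x' \<omega>) \<in> borel_measurable (muQ Q (\<lambda>_. star))"
    by measurable
  fix \<omega>
  show "\<bar>Lik Q star K x \<omega> * Lik Q star K x' \<omega>\<bar> \<le> cQ Q star ^ K * cQ Q star ^ K"
    using Lik_le[of Q star K x \<omega>] Lik_le[of Q star K x' \<omega>] Lik_nonneg[of Q star K x \<omega>] Lik_nonneg[of Q star K x' \<omega>]
    by (simp add: abs_mult mult_mono')
qed

lemma int_L:
  fixes Q :: "'x::finite \<Rightarrow> 'y::finite pmf"
  shows "integrable (muQ Q (\<lambda>_. star)) (\<lambda>\<omega>. Lik Q star K x \<omega>)"
  using Lik_le[of Q star K x] Lik_nonneg[of Q star K x]
  by (intro int_bounded_muQ[where C="cQ Q star ^ K"]) auto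

lemma mm_le_T:
  fixes Q :: "'x::finite \<Rightarrow> 'y::finite pmf"
  assumes pos: "\<forall>y. pmf (Q star) y > 0" and T: "0 \<le> T"
  shows "(\<integral>\<omega>. min (Lik Q star K x \<omega>) T * min (Lik Q star K x' \<omega>) T \<partial>muQ Q (\<lambda>_. star)) \<le> T"
proof -
  have "(\<integral>\<omega>. min (Lik Q star K x \<omega>) T * min (Lik Q star K x' \<omega>) T \<partial>muQ Q (\<lambda>_. star))
      \<le> (\<integral>\<omega>. T * Lik Q star K x' \<omega> \<partial>muQ Q (\<lambda>_. star))"
    using int_mm[OF T, of Q star K x x'] int_L[of Q star K x'] T
    by (intro integral_mono) (auto intro!: mult_mono simp: Lik_nonneg)
  also have "\<dots> = T" using mean_Lik[of Q star K x', OF pos] by simp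
  finally show ?thesis .
qed

lemma mm_le_1:
  fixes Q :: "'x::finite \<Rightarrow> 'y::finite pmf"
  assumes pos: "\<forall>y. pmf (Q star) y > 0" and T: "0 \<le> T" and dis: "\<forall>j. x j = star \<or> x' j = star"
  shows "(\<integral>\<omega>. min (Lik Q star K x \<omega>) T * min (Lik Q star K x' \<omega>) T \<partial>muQ Q (\<lambda>_. star)) \<le> 1"
proof -
  have "(\<integral>\<omega>. min (Lik Q star K x \<omega>) T * min (Lik Q star K x' \<omega>) T \<partial>muQ Q (\<lambda>_. star))
      \<le> (\<integral>\<omega>. Lik Q star K x \<omega> * Lik Q star K x' \<omega> \<partial>muQ Q (\<lambda>_. star))"
    using int_mm[OF T, of Q star K x x'] int_LL[of Q star K x x'] T
    by (intro integral_mono) (auto intro!: mult_mono simp: Lik_nonneg)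
  also have "\<dots> = 1" using pair_Lik[of Q star x x' K, OF pos dis] .
  finally show ?thesis .
qed

lemma chan_star: "l \<le> A \<Longrightarrow> A + N \<le> j \<Longrightarrow> chan_input star N cw l j = star"
  by (simp add: chan_input_def)

lemma chan_dis: "\<not> (l' < l + N \<and> l < l' + N) \<Longrightarrow> chan_input star N cw l j = star \<or> chan_input star N cw' l' j = star"
  by (auto simp: chan_input_def)

lemma count_overlap: "card {l'\<in>S. l' < l + N \<and> l < l' + N} \<le> 2 * N"
proof -
  have "{l'\<in>S. l' < l + N \<and> l < l' + N} \<subseteq> {l + 1 - N..<l + N}" by auto
  then have "card {l'\<in>S. l' < l + N \<and> l < l' + N} \<le> card {l + 1 - N..<l + N}"
    by (intro card_mono) auto
  also have "\<dots> \<le> 2 * N" by simp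
  finally show ?thesis .
qed

lemma sq_bound:
  fixes Q :: "'x::finite \<Rightarrow> 'y::finite pmf"
  assumes pos: "\<forall>y. pmf (Q star) y > 0" and T: "0 \<le> T" and S: "finite S" "S \<noteq> {}"
  shows "(\<Sum>l\<in>S. \<Sum>l'\<in>S. \<integral>\<omega>. min (Lik Q star K (chan_input star N cw l) \<omega>) T * min (Lik Q star K (chan_input star N cw l') \<omega>) T \<partial>muQ Q (\<lambda>_. star))
     \<le> (real (card S))^2 * (1 + 2 * real N * T / real (card S))"
proof -
  let ?f = "\<lambda>l l'. \<integral>\<omega>. min (Lik Q star K (chan_input star N cw l) \<omega>) T * min (Lik Q star K (chan_input star N cw l') \<omega>) T \<partial>muQ Q (\<lambda>_. star)"
  have each: "?f l l' \<le> 1 + (if l' < l + N \<and> l < l' + N then T else 0)" for l l'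
  proof (cases "l' < l + N \<and> l < l' + N")
    case True
    then show ?thesis using mm_le_T[of Q star T, OF pos T] by (simp add: add_increasing)
  next
    case False
    then show ?thesis using mm_le_1[of Q star T "chan_input star N cw l" "chan_input star N cw l'" K, OF pos T] chan_dis[OF False, of star cw _ cw] by auto
  qed
  have "(\<Sum>l\<in>S. \<Sum>l'\<in>S. ?f l l') \<le> (\<Sum>l\<in>S. \<Sum>l'\<in>S. 1 + (if l' < l + N \<and> l < l' + N then T else 0))"
    by (intro sum_mono each)
  also have "\<dots> = (\<Sum>l\<in>S. real (card S) + T * real (card {l'\<in>S. l' < l + N \<and> l < l' + N}))"
    using S by (simp add: sum.distrib sum.If_cases Int_def mult.commute)
  also have "\<dots> \<le> (\<Sum>l\<in>S. real (card S) + T * (2 * real N))"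
  proof (intro sum_mono add_left_mono mult_left_mono T)
    fix l show "real (card {l'\<in>S. l' < l + N \<and> l < l' + N}) \<le> 2 * real N"
      using count_overlap[of S l N] by linarith
  qed
  also have "\<dots> = (real (card S))^2 * (1 + 2 * real N * T / real (card S))"
    using S by (simp add: power2_eq_square field_simps)
  finally show ?thesis .
qed

lemma tail_prod:
  fixes g :: "'x \<Rightarrow> real"
  assumes gs: "g star = 1" and gx: "\<And>x. 0 \<le> g x \<and> g x \<le> e" and e: "1 \<le> e" and l: "1 \<le> l"
  shows "(\<Prod>j<K. g (chan_input star N cw l j)) \<le> e ^ N"
proof -
  let ?W = "{l - 1..<l - 1 + N}"
  have "(\<Prod>j<K. g (chan_input star N cw l j)) \<le> (\<Prod>j<K. if j \<in> ?W then e else 1)"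
  proof (intro prod_mono conjI)
    fix j assume "j \<in> {..<K}"
    show "0 \<le> g (chan_input star N cw l j)" using gx by blast
    show "g (chan_input star N cw l j) \<le> (if j \<in> ?W then e else 1)"
    proof (cases "j \<in> ?W")
      case True then show ?thesis using gx by simp
    next
      case False
      then have "chan_input star N cw l j = star" using l by (auto simp: chan_input_def)
      then show ?thesis using False gs e by simp
    qed
  qed
  also have "\<dots> = e ^ card ({..<K} \<inter> {j. j \<in> ?W})"
    by (simp only: prod.If_cases finite_lessThan prod_constant power_one mult_1_right)
  also have "\<dots> \<le> e ^ N"
  proof (rule power_increasing[OF _ e])
    have "card ({..<K} \<inter> {j. j \<in> ?W}) \<le> card ?W" by (intro card_mono) auto
    then show "card ({..<K} \<inter> {j. j \<in> ?W}) \<le> N" by simp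
  qed
  finally show ?thesis .
qed



lemma out_muQ: "out_measure Q star N cw l = muQ Q (chan_input star N cw l)"
  by (simp add: out_measure_def muQ_def)

lemma err_eq:
  fixes Q :: "'x::finite \<Rightarrow> 'y::finite pmf"
  shows "err_prob Q star N c stop dec m l = 1 - measure (muQ Q (chan_input star N (c m) l)) (Ev stop dec m)"
proof -
  interpret prob_space "muQ Q (chan_input star N (c m) l)" by (rule prob_space_muQ)
  have "{\<omega> \<in> space (out_measure Q star N (c m) l). stop_time stop \<omega> = \<infinity> \<or> dec (map \<omega> [0..<the_enat (stop_time stop \<omega>)]) \<noteq> m}
      = space (muQ Q (chan_input star N (c m) l)) - Ev stop dec m"
    by (auto simp: out_muQ Ev_def)
  then show ?thesis
    unfolding err_prob_def using meas_Ev[of stop dec m Q] prob_compl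
    by (simp add: out_muQ)
qed

lemma code_bound:
  fixes Q :: "'x::finite \<Rightarrow> 'y::finite pmf" and c :: "nat \<Rightarrow> nat \<Rightarrow> 'x"
  assumes pos: "\<forall>y. pmf (Q star) y > 0" and M: "2 \<le> M" and A: "1 \<le> A"
    and s: "s > 0" and T: "T > 0" and e: "1 \<le> e"
    and gb: "\<And>x. (\<Sum>y\<in>UNIV. pmf (Q star) y * rr Q star x y powr (1 + s)) \<le> e"
  shows "avg_err Q star A N M c stop dec \<ge>
     1 - (1 + 1/4) / 2 - ((2 * real N * T / real A + 2 * (T powr (-s) * e ^ N)) / (1/4) + T powr (-s) * e ^ N)"
proof -
  define S where "S = {1..A}"
  define K where "K = A + N"
  define \<tau> where "\<tau> = T powr (-s) * e ^ N"
  define \<eta> :: real where "\<eta> = 1/4"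
  define V where "V = 2 * real N * T / real A"
  define R where "R = (V + 2 * \<tau>) / \<eta> + \<tau>"
  define P where "P = muQ Q (\<lambda>_. star)"
  interpret P: prob_space P unfolding P_def by (rule prob_space_muQ)
  have cardS: "card S = A" "finite S" "S \<noteq> {}" using A by (auto simp: S_def)
  have xK: "\<forall>j\<ge>K. chan_input star N cw l j = star" if "l \<in> S" for cw l
    using that by (auto simp: S_def K_def chan_star)
  have gstar: "(\<Sum>y\<in>UNIV. pmf (Q star) y * rr Q star star y powr (1 + s)) = 1"
  proof -
    have "(\<Sum>y\<in>UNIV. pmf (Q star) y * rr Q star star y powr (1 + s)) = (\<Sum>y\<in>UNIV. pmf (Q star) y)"
    proof (intro sum.cong refl)
      fix y :: 'y
      have "pmf (Q star) y > 0" using pos by blast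
      then show "pmf (Q star) y * rr Q star star y powr (1 + s) = pmf (Q star) y" by (simp add: rr_star)
    qed
    then show ?thesis by (simp add: sum_pmf_eq_1)
  qed
  have g0: "0 \<le> (\<Sum>y\<in>UNIV. pmf (Q star) y * rr Q star x y powr (1 + s))" for x
    by (intro sum_nonneg) auto
  have per_m: "(\<Sum>l\<in>S. measure (muQ Q (chan_input star N (c m) l)) (Ev stop dec m))
      \<le> real A * ((1 + \<eta>) * measure P (Ev stop dec m) + R)" for m
  proof -
    let ?L = "\<lambda>l. Lik Q star K (chan_input star N (c m) l)"
    have "(\<Sum>l\<in>S. measure (muQ Q (chan_input star N (c m) l)) (Ev stop dec m))
        = (\<Sum>l\<in>S. \<integral>\<omega>. indicator (Ev stop dec m) \<omega> * ?L l \<omega> \<partial>P)"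
      unfolding P_def
      by (intro sum.cong refl meas_eq_int[where Q=Q and star=star, OF pos] xK meas_Ev)
    also have "\<dots> \<le> real (card S) * ((1 + \<eta>) * measure P (Ev stop dec m) + (V + 2 * \<tau>) / \<eta> + \<tau>)"
    proof (rule key_avg[where Bd="cQ Q star ^ K" and T=T])
      show "prob_space P" by (rule P.prob_space_axioms)
      show "finite S" "S \<noteq> {}" using cardS by auto
      show "\<And>l. l \<in> S \<Longrightarrow> ?L l \<in> borel_measurable P" unfolding P_def by measurable
      show "\<And>l \<omega>. l \<in> S \<Longrightarrow> \<omega> \<in> space P \<Longrightarrow> 0 \<le> ?L l \<omega> \<and> ?L l \<omega> \<le> cQ Q star ^ K"
        by (simp add: Lik_nonneg Lik_le)
      show "\<And>l. l \<in> S \<Longrightarrow> (\<integral>\<omega>. ?L l \<omega> \<partial>P) = 1" unfolding P_def by (rule mean_Lik[where Q=Q and star=star, OF pos])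
      show "0 \<le> T" using T by simp
      show "(\<integral>\<omega>. (if ?L l \<omega> > T then ?L l \<omega> else 0) \<partial>P) \<le> \<tau>" if l: "l \<in> S" for l
      proof -
        have "(\<integral>\<omega>. (if ?L l \<omega> > T then ?L l \<omega> else 0) \<partial>P)
            \<le> T powr (-s) * (\<Prod>j<K. \<Sum>y\<in>UNIV. pmf (Q star) y * rr Q star (chan_input star N (c m) l j) y powr (1 + s))"
          unfolding P_def by (rule tail_Lik[where Q=Q and star=star, OF pos s T])
        also have "\<dots> \<le> T powr (-s) * e ^ N"
        proof (intro mult_left_mono)
          show "(\<Prod>j<K. \<Sum>y\<in>UNIV. pmf (Q star) y * rr Q star (chan_input star N (c m) l j) y powr (1 + s)) \<le> e ^ N"
            using l gstar g0 gb e
            by (intro tail_prod[where g="\<lambda>x. \<Sum>y\<in>UNIV. pmf (Q star) y * rr Q star x y powr (1 + s)"]) (auto simp: S_def)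
        qed simp
        finally show ?thesis by (simp add: \<tau>_def)
      qed
      show "(\<Sum>l\<in>S. \<Sum>l'\<in>S. \<integral>\<omega>. min (?L l \<omega>) T * min (?L l' \<omega>) T \<partial>P) \<le> (real (card S))^2 * (1 + V)"
        unfolding P_def V_def using sq_bound[where Q=Q and star=star, OF pos _ cardS(2,3), of T] T cardS by simp
      show "Ev stop dec m \<in> sets P" unfolding P_def by (rule meas_Ev)
      show "\<eta> > 0" by (simp add: \<eta>_def)
    qed
    finally show ?thesis by (simp add: R_def cardS add.assoc)
  qed
  have disj: "disjoint_family_on (\<lambda>m. Ev stop dec m) {..<M}"
    by (auto simp: disjoint_family_on_def Ev_def)
  have sumP: "(\<Sum>m<M. measure P (Ev stop dec m)) \<le> 1"
  proof -
    have "(\<Sum>m<M. measure P (Ev stop dec m)) = measure P (\<Union>m<M. Ev stop dec m)"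
      using disj unfolding P_def by (intro P.finite_measure_finite_Union[symmetric, unfolded P_def]) (auto intro: meas_Ev)
    also have "\<dots> \<le> 1" by (rule P.prob_le_1)
    finally show ?thesis .
  qed
  have tot: "(\<Sum>m<M. \<Sum>l\<in>S. measure (muQ Q (chan_input star N (c m) l)) (Ev stop dec m))
      \<le> real A * ((1 + \<eta>) + real M * R)"
  proof -
    have "(\<Sum>m<M. \<Sum>l\<in>S. measure (muQ Q (chan_input star N (c m) l)) (Ev stop dec m))
        \<le> (\<Sum>m<M. real A * ((1 + \<eta>) * measure P (Ev stop dec m) + R))"
      by (intro sum_mono per_m)
    also have "\<dots> = real A * ((1 + \<eta>) * (\<Sum>m<M. measure P (Ev stop dec m)) + real M * R)"
      by (simp add: sum.distrib sum_distrib_left algebra_simps)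
    also have "\<dots> \<le> real A * ((1 + \<eta>) * 1 + real M * R)"
      using sumP A by (intro mult_left_mono add_right_mono) (auto simp: \<eta>_def)
    finally show ?thesis by simp
  qed
  have "avg_err Q star A N M c stop dec
      = (real A * real M - (\<Sum>m<M. \<Sum>l\<in>S. measure (muQ Q (chan_input star N (c m) l)) (Ev stop dec m))) / (real A * real M)"
    unfolding avg_err_def err_eq S_def[symmetric]
    by (simp add: sum_subtractf cardS)
  also have "\<dots> \<ge> (real A * real M - real A * ((1 + \<eta>) + real M * R)) / (real A * real M)"
    using tot A M by (intro divide_right_mono) auto
  also have "(real A * real M - real A * ((1 + \<eta>) + real M * R)) / (real A * real M) = 1 - (1 + \<eta>) / real M - R"
    using A M by (simp add: field_simps)
  finally have "avg_err Q star A N M c stop dec \<ge> 1 - (1 + \<eta>) / real M - R" .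
  moreover have "(1 + \<eta>) / real M \<le> (1 + \<eta>) / 2"
    using M by (intro divide_left_mono) (auto simp: \<eta>_def)
  ultimately show ?thesis by (simp add: R_def V_def \<tau>_def \<eta>_def)
qed



lemma exp_sq: "0 \<le> y \<Longrightarrow> y^2 / 4 \<le> exp (y::real)"
proof -
  assume y: "0 \<le> y"
  have "y / 2 \<le> 1 + y / 2" by simp
  also have "\<dots> \<le> exp (y / 2)" by (rule exp_ge_add_one_self)
  finally have "(y / 2)^2 \<le> (exp (y / 2))^2" using y by (intro power_mono) auto
  also have "\<dots> = exp y" by (simp add: exp_double[symmetric])
  finally show ?thesis by (simp add: power_divide)
qed

lemma bound_a:
  fixes \<gamma> N :: real
  assumes g: "\<gamma> > 0" and N: "N \<ge> 2048 / \<gamma>^2"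
  shows "N / exp (N * \<gamma> / 2) \<le> 1 / 128"
proof -
  have "0 < 2048 / \<gamma>^2" using g by simp
  then have Npos: "N > 0" using N by linarith
  have "(N * \<gamma> / 2)^2 / 4 \<le> exp (N * \<gamma> / 2)" using Npos g by (intro exp_sq) auto
  then have e: "N^2 * \<gamma>^2 / 16 \<le> exp (N * \<gamma> / 2)" by (simp add: power_mult_distrib power_divide)
  have "N / exp (N * \<gamma> / 2) \<le> N / (N^2 * \<gamma>^2 / 16)"
    using Npos g e by (intro divide_left_mono) auto
  also have "\<dots> = 16 / (N * \<gamma>^2)" using Npos g by (simp add: field_simps power2_eq_square)
  also have "\<dots> \<le> 16 / 2048"
  proof -
    have "2048 \<le> N * \<gamma>^2" using N g by (simp add: field_simps)
    then show ?thesis using g by (intro divide_left_mono) auto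
  qed
  finally show ?thesis by simp
qed

lemma bound_b:
  fixes x :: real
  assumes "x \<ge> 150"
  shows "exp (- x) \<le> 1 / 144"
proof -
  have "151 \<le> 1 + x" using assms by simp
  also have "\<dots> \<le> exp x" by (rule exp_ge_add_one_self)
  finally have "144 \<le> exp x" by simp
  then show ?thesis by (simp add: exp_minus field_simps)
qed

lemma KL_self: "KL_div P P = 0"
  unfolding KL_div_def by (intro sum.neutral) auto

theorem proposition1:
  fixes Q :: "'x::finite \<Rightarrow> 'y::finite pmf" and star :: 'x and \<alpha> R :: real
  assumes "\<forall>y. \<exists>x. pmf (Q x) y > 0"
    and "capacity Q > 0"
    and "\<forall>y. pmf (Q star) y > 0"
    and "R \<ge> 0"
    and "\<alpha> > (MAX x. KL_div (Q x) (Q star))"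
  shows "\<not> achievable Q star \<alpha> R"
proof
  assume ach: "achievable Q star \<alpha> R"
  have pos: "\<forall>y. pmf (Q star) y > 0" using assms(3) .
  define Dm where "Dm = (MAX x. KL_div (Q x) (Q star))"
  have KLle: "KL_div (Q x) (Q star) \<le> Dm" for x unfolding Dm_def by (rule Max_ge) auto
  have Dm0: "0 \<le> Dm" using KLle[of star] by (simp add: KL_self)
  define \<gamma> where "\<gamma> = (\<alpha> - Dm) / 2"
  have g: "\<gamma> > 0" using assms(5) by (simp add: \<gamma>_def Dm_def)
  define \<epsilon> :: real where "\<epsilon> = min (1/8) \<gamma>"
  have epsg: "\<epsilon> \<le> \<gamma>" by (simp add: \<epsilon>_def)
  have eps3: "\<alpha> - \<epsilon> \<ge> Dm + \<gamma>" using epsg unfolding \<gamma>_def by (simp add: field_simps)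
  have eps: "\<epsilon> > 0" "\<epsilon> \<le> 1/8" "\<alpha> - \<epsilon> \<ge> Dm + \<gamma>"
    using g eps3 by (auto simp: \<epsilon>_def)
  define B where "B = Dm + \<gamma> / 4"
  have "\<forall>x. KL_div (Q x) (Q star) < B"
  proof
    fix x
    have "KL_div (Q x) (Q star) \<le> Dm" by (rule KLle)
    then show "KL_div (Q x) (Q star) < B" using g unfolding B_def by simp
  qed
  from renyi[of Q star, OF pos this] obtain s where s: "s > 0"
    and gb: "\<And>x. (\<Sum>y\<in>UNIV. pmf (Q star) y * rr Q star x y powr (1 + s)) \<le> exp (s * B)" by blast
  define N0 where "N0 = nat \<lceil>2048 / \<gamma>^2 + 600 / (s * \<gamma>)\<rceil> + 1"
  from ach eps(1) obtain N M c stop dec where N: "N \<ge> N0" and M: "M \<ge> (2::nat)"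
    and err: "avg_err Q star (nat \<lceil>exp ((\<alpha> - \<epsilon>) * real N)\<rceil>) N M c stop dec \<le> \<epsilon>"
    unfolding achievable_def Let_def by blast
  define A where "A = nat \<lceil>exp ((\<alpha> - \<epsilon>) * real N)\<rceil>"
  have Age: "real A \<ge> exp ((\<alpha> - \<epsilon>) * real N)" unfolding A_def by linarith
  have "0 < \<lceil>exp ((\<alpha> - \<epsilon>) * real N)\<rceil>" by simp
  then have A1: "1 \<le> A" unfolding A_def by linarith
  have Nbig: "real N \<ge> 2048 / \<gamma>^2 + 600 / (s * \<gamma>)"
  proof -
    have "2048 / \<gamma>^2 + 600 / (s * \<gamma>) \<le> real N0" unfolding N0_def by linarith
    then show ?thesis using N by linarith
  qed
  have pos600: "0 \<le> 600 / (s * \<gamma>)" "0 \<le> 2048 / \<gamma>^2" using s g by auto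
  define T where "T = exp (real N * (Dm + \<gamma> / 2))"
  define e where "e = exp (s * B)"
  have T: "T > 0" by (simp add: T_def)
  have e: "1 \<le> e" using s Dm0 g by (simp add: e_def B_def)
  note cb = code_bound[where Q=Q and star=star, OF pos M A1 s T e gb[folded e_def], of N c stop dec]
  have tau: "T powr (-s) * e ^ N = exp (- (s * \<gamma> / 4 * real N))"
  proof -
    have "T powr (-s) = exp (- s * (real N * (Dm + \<gamma> / 2)))" by (simp add: T_def powr_def)
    moreover have "e ^ N = exp (real N * (s * B))" by (simp add: e_def exp_of_nat_mult)
    ultimately show ?thesis by (simp add: exp_add[symmetric] B_def algebra_simps)
  qed
  have taub: "T powr (-s) * e ^ N \<le> 1 / 144"
  proof -
    have N600: "600 / (s * \<gamma>) \<le> real N" using Nbig pos600 by linarith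
    have "s * \<gamma> * real N \<ge> s * \<gamma> * (600 / (s * \<gamma>))"
      using N600 s g by (intro mult_left_mono) auto
    then have "s * \<gamma> * real N \<ge> 600" using s g by simp
    then have "s * \<gamma> / 4 * real N \<ge> 150" by simp
    then show ?thesis unfolding tau by (rule bound_b)
  qed
  have ratio: "real N * T / real A \<le> 1 / 128"
  proof -
    have Apos: "real A > 0" using A1 by simp
    have "real N * T / real A \<le> real N * T / exp ((\<alpha> - \<epsilon>) * real N)"
      using Age T Apos by (intro divide_left_mono) auto
    also have "\<dots> \<le> real N * T / exp (real N * (Dm + \<gamma>))"
      using eps(3) T by (intro divide_left_mono) (auto simp: mult.commute intro!: mult_left_mono)
    also have "\<dots> = real N / exp (real N * \<gamma> / 2)"
    proof -
      have "exp (real N * (Dm + \<gamma>)) = T * exp (real N * \<gamma> / 2)"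
        by (simp add: T_def exp_add[symmetric] algebra_simps)
      then show ?thesis using T by simp
    qed
    also have "\<dots> \<le> 1 / 128"
      using Nbig pos600 by (intro bound_a[OF g]) linarith
    finally show ?thesis .
  qed
  have "avg_err Q star A N M c stop dec \<ge> 1 / 4"
  proof -
    define a where "a = real N * T / real A"
    define b where "b = T powr (-s) * e ^ N"
    have ab: "a \<le> 1/128" "b \<le> 1/144" using ratio taub by (simp_all add: a_def b_def)
    have "(2 * real N * T / real A + 2 * (T powr (-s) * e ^ N)) / (1/4) + T powr (-s) * e ^ N = 8 * a + 9 * b"
      by (simp add: a_def b_def)
    also have "\<dots> \<le> 1 / 8" using ab by linarith
    finally have "(2 * real N * T / real A + 2 * (T powr (-s) * e ^ N)) / (1/4) + T powr (-s) * e ^ N \<le> 1 / 8" .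
    then show ?thesis using cb by simp
  qed
  then show False using err eps(2) by (simp add: A_def)
qed


end
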